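(* Let $X_1=\{(\alpha,\beta):\alpha\in(0,\pi/4],\ \beta\in[t(\alpha),\alpha]\}$ and $X_2=\{(\alpha,\beta):\alpha\in[\pi/4,\pi/2),\ \beta\in[0,\alpha]\}$. For all $(\alpha,\beta)\in X_1\cup X_2$, the competitive ratio of the $\beta$-Hedge algorithm with parameter $\beta$ (for half angle-of-view $\alpha$) equals $f_1(\alpha,\beta,r_0(\alpha,\beta))$.
   Context: Online drone coverage on a line. A drone has a fixed half angle-of-view $\alpha\in(0,\pi/2)$. A drone at a point $T=(t_x,t_y)$ with $t_y\ge 0$ covers the segment $[t_x-t_y\tan\alpha,\ t_x+t_y\tan\alpha]$ of the $x$-axis. For a point $X=(x,0)$ its feasibility cone is $\mathrm{FC}(X)=\{(u,v): v\ge 0,\ |u-x|\le v\tan\alpha\}$, and the feasibility cone of a finite set of points is the intersection of their cones. An input is a sequence $X_0=(0,0),X_1,\dots,X_n$ ($n\ge1$) of points $X_i=(x_i,0)$ revealed one at a time. A solution is a sequence of positions $P_0=(0,0),P_1,\dots,P_n$ with $P_i\in\mathrm{FC}(X_0,\dots,X_i)$; its cost is $\sum_i|P_iP_{i+1}|$. $\mathrm{OPT}$ is the minimum cost of a solution (input known in advance). A request $X_{i+1}$ is redundant if $x_{i+1}\in[\min_{j\le i}x_j,\max_{j\le i}x_j]$. An input is good if it has no redundant requests, $\min_j x_j=-1$ and $\max_j x_j\in[0,1]$. The competitive ratio is the supremum over good inputs of the algorithm's cost divided by $\mathrm{OPT}$. The $\beta$-Hedge algorithm with parameter $\beta\in[0,\alpha]$: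 if $P_{i-1}\in\mathrm{FC}(X_0,\dots,X_i)$ then $P_i=P_{i-1}$; otherwise the drone moves from $P_{i-1}$ along the ray with direction $(\operatorname{sgn}(x_i)\sin\beta,\cos\beta)$, and $P_i$ is the first point of this ray in $\mathrm{FC}(X_0,\dots,X_i)$. $f_1(\alpha,\beta,r)=\frac{2\sin\alpha}{\cos\beta(\tan\alpha+\tan\beta)}\cdot\frac{1+\frac{2\tan\beta}{\tan\alpha+\tan\beta}r}{\sqrt{1+r^2+2\cos(2\alpha)r}}$; with $A=\frac{2\tan\beta}{\tan\alpha+\tan\beta}$, $B=2\cos(2\alpha)$, $r_0(\alpha,\beta)=\frac{2A-B}{2-AB}$; and $t(\alpha)=\arctan\!\left(\frac{\sin(3\alpha)-\sin\alpha}{3\cos\alpha-\cos(3\alpha)}\right)$. *)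

theory Defs
  imports Complex_Main "HOL-Library.Extended_Real"
begin

type_synonym pt = "real \<times> real"

definition edist :: "pt \<Rightarrow> pt \<Rightarrow> real" where
  "edist p q = sqrt ((fst p - fst q)^2 + (snd p - snd q)^2)"

definition FC :: "real \<Rightarrow> real \<Rightarrow> pt set" where
  "FC \<alpha> x = {(u,v). v \<ge> 0 \<and> \<bar>u - x\<bar> \<le> v * tan \<alpha>}"

definition FCs :: "real \<Rightarrow> (nat \<Rightarrow> real) \<Rightarrow> nat \<Rightarrow> pt set" where
  "FCs \<alpha> x i = (\<Inter>j\<in>{..i}. FC \<alpha> (x j))"

definition cost :: "(nat \<Rightarrow> pt) \<Rightarrow> nat \<Rightarrow> real" where
  "cost P n = (\<Sum>i<n. edist (P i) (P (Suc i)))"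

definition solution :: "real \<Rightarrow> (nat \<Rightarrow> real) \<Rightarrow> nat \<Rightarrow> (nat \<Rightarrow> pt) \<Rightarrow> bool" where
  "solution \<alpha> x n P \<longleftrightarrow> P 0 = (0,0) \<and> (\<forall>i\<le>n. P i \<in> FCs \<alpha> x i)"

definition OPT :: "real \<Rightarrow> (nat \<Rightarrow> real) \<Rightarrow> nat \<Rightarrow> real" where
  "OPT \<alpha> x n = Inf {cost P n | P. solution \<alpha> x n P}"

primrec hedge :: "real \<Rightarrow> real \<Rightarrow> (nat \<Rightarrow> real) \<Rightarrow> nat \<Rightarrow> pt" where
  "hedge \<alpha> \<beta> x 0 = (0,0)"
| "hedge \<alpha> \<beta> x (Suc i) =
     (let P = hedge \<alpha> \<beta> x i;
          d = (sgn (x (Suc i)) * sin \<beta>, cos \<beta>);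
          ray = (\<lambda>t::real. (fst P + t * fst d, snd P + t * snd d))
      in if P \<in> FCs \<alpha> x (Suc i) then P
         else ray (Inf {t. t \<ge> 0 \<and> ray t \<in> FCs \<alpha> x (Suc i)}))"

definition redundant :: "(nat \<Rightarrow> real) \<Rightarrow> nat \<Rightarrow> bool" where
  "redundant x i \<longleftrightarrow>
     Min (x ` {..i}) \<le> x (Suc i) \<and> x (Suc i) \<le> Max (x ` {..i})"

definition good_input :: "(nat \<Rightarrow> real) \<Rightarrow> nat \<Rightarrow> bool" where
  "good_input x n \<longleftrightarrow> n \<ge> 1 \<and> x 0 = 0 \<and> (\<forall>i<n. \<not> redundant x i)
     \<and> Min (x ` {..n}) = -1 \<and> Max (x ` {..n}) \<in> {0..1}"

definition hedge_ratio :: "real \<Rightarrow> real \<Rightarrow> ereal" where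
  "hedge_ratio \<alpha> \<beta> =
     (SUP xn \<in> {(x,n). good_input x n}.
        ereal (cost (hedge \<alpha> \<beta> (fst xn)) (snd xn) / OPT \<alpha> (fst xn) (snd xn)))"

definition f1 :: "real \<Rightarrow> real \<Rightarrow> real \<Rightarrow> real" where
  "f1 \<alpha> \<beta> r = 2 * sin \<alpha> / (cos \<beta> * (tan \<alpha> + tan \<beta>)) *
     ((1 + (2 * tan \<beta> / (tan \<alpha> + tan \<beta>)) * r) / sqrt (1 + r^2 + 2 * cos (2*\<alpha>) * r))"

definition r0 :: "real \<Rightarrow> real \<Rightarrow> real" where
  "r0 \<alpha> \<beta> = (let A = 2 * tan \<beta> / (tan \<alpha> + tan \<beta>); B = 2 * cos (2*\<alpha>)
              in (2*A - B) / (2 - A*B))"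

definition tfun :: "real \<Rightarrow> real" where
  "tfun \<alpha> = arctan ((sin (3*\<alpha>) - sin \<alpha>) / (3 * cos \<alpha> - cos (3*\<alpha>)))"

end

theory Submission
  imports Defs "HOL-Analysis.Product_Vector"
begin


lemma FCs_iff:
  "(u,v) \<in> FCs a x i \<longleftrightarrow> 0 \<le> v \<and> Max (x`{..i}) \<le> u + v*tan a \<and> u - v*tan a \<le> Min (x`{..i})"
proof -
  have "(u,v) \<in> FCs a x i \<longleftrightarrow> (\<forall>j\<le>i. 0 \<le> v \<and> \<bar>u - x j\<bar> \<le> v * tan a)"
    unfolding FCs_def FC_def by auto
  also have "\<dots> \<longleftrightarrow> 0 \<le> v \<and> (\<forall>j\<le>i. x j \<le> u + v*tan a) \<and> (\<forall>j\<le>i. u - v*tan a \<le> x j)"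
    by (auto simp: abs_le_iff)
  also have "\<dots> \<longleftrightarrow> 0 \<le> v \<and> Max (x`{..i}) \<le> u + v*tan a \<and> u - v*tan a \<le> Min (x`{..i})"
    by (auto simp: Max_le_iff Min_ge_iff)
  finally show ?thesis .
qed

declare Max_le_iff[simp del] Min_ge_iff[simp del] Max_less_iff[simp del] Min_gr_iff[simp del]
  Max_ge_iff[simp del] Min_le_iff[simp del] Max_gr_iff[simp del] Min_less_iff[simp del]
  minus_Max_eq_Min[simp del] minus_Min_eq_Max[simp del]

lemma Max_Suc: "Max ((x::nat\<Rightarrow>real)`{..Suc i}) = max (Max (x`{..i})) (x (Suc i))"
  by (simp add: atMost_Suc max.commute)

lemma Min_Suc: "Min ((x::nat\<Rightarrow>real)`{..Suc i}) = min (Min (x`{..i})) (x (Suc i))"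
  by (simp add: atMost_Suc min.commute)

lemma Max_ge0: "(x::nat\<Rightarrow>real) 0 \<le> Max (x`{..i})"
  by (rule Max_ge) auto

lemma Min_le0: "Min ((x::nat\<Rightarrow>real)`{..i}) \<le> x 0"
  by (rule Min_le) auto

lemma cost_Suc: "cost P (Suc i) = cost P i + edist (P i) (P (Suc i))"
  by (simp add: cost_def)

lemma edist_dist: "edist p q = dist p q"
  by (cases p; cases q) (simp add: edist_def dist_Pair_Pair dist_real_def)

lemma cost_ge: "edist (P 0) (P n) \<le> cost P n"
proof (induction n)
  case 0 then show ?case by (simp add: cost_def edist_def)
next
  case (Suc n)
  have "edist (P 0) (P (Suc n)) \<le> edist (P 0) (P n) + edist (P n) (P (Suc n))"
    unfolding edist_dist by (rule dist_triangle)
  then show ?case using Suc by (simp add: cost_Suc)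
qed

lemma Min_le_Max: "Min ((x::nat\<Rightarrow>real)`{..i}) \<le> Max (x`{..i})"
  using Max_ge0[of x i] Min_le0[of x i] by linarith

definition kp :: "real \<Rightarrow> real \<Rightarrow> real" where "kp a b = sin b + cos b * tan a"
definition km :: "real \<Rightarrow> real \<Rightarrow> real" where "km a b = cos b * tan a - sin b"

lemma hedge_unfold:
  assumes H: "hedge a b x i = (u,v)"
  shows "hedge a b x (Suc i) = (if (u,v) \<in> FCs a x (Suc i) then (u,v) else
     (u + Inf {t. 0 \<le> t \<and> (u + t * (sgn (x (Suc i)) * sin b), v + t * cos b) \<in> FCs a x (Suc i)} * (sgn (x (Suc i)) * sin b),
      v + Inf {t. 0 \<le> t \<and> (u + t * (sgn (x (Suc i)) * sin b), v + t * cos b) \<in> FCs a x (Suc i)} * cos b))"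
  by (simp add: H Let_def)

lemma hedge_right:
  assumes kpos: "0 < kp a b" and kmnn: "0 \<le> km a b" and cb: "0 \<le> cos b"
    and H: "hedge a b x i = (u,v)" and feas: "(u,v) \<in> FCs a x i"
    and gt: "Max (x`{..i}) < x (Suc i)" and x0: "x 0 = 0"
    and nf: "u + v * tan a < x (Suc i)"
  shows "hedge a b x (Suc i) = (u + ((x (Suc i) - (u + v*tan a))/kp a b) * sin b,
                               v + ((x (Suc i) - (u + v*tan a))/kp a b) * cos b)"
proof -
  let ?y = "x (Suc i)"
  have xpos: "0 < ?y" using Max_ge0[of x i] gt x0 by linarith
  then have sg: "sgn ?y = 1" by simp
  have notin: "(u,v) \<notin> FCs a x (Suc i)"
    using nf gt by (simp add: FCs_iff Max_Suc)
  define T where "T = (?y - (u + v*tan a))/kp a b"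
  have Tpos: "0 < T" using nf kpos by (simp add: T_def)
  have fe: "0 \<le> v" "Max (x`{..i}) \<le> u + v*tan a" "u - v*tan a \<le> Min (x`{..i})"
    using feas by (auto simp: FCs_iff)
  have mn: "min (Min (x`{..i})) ?y = Min (x`{..i})" using Min_le_Max[of x i] gt by (intro min_absorb1) linarith
  have mx: "max (Max (x`{..i})) ?y = ?y" using gt by (intro max_absorb2) linarith
  have mem: "0 \<le> t \<and> (u + t * (sgn ?y * sin b), v + t * cos b) \<in> FCs a x (Suc i) \<longleftrightarrow> T \<le> t" for t
  proof -
    have e1: "u + t * sin b + (v + t * cos b) * tan a = (u + v*tan a) + t * kp a b"
      by (simp add: kp_def algebra_simps)
    have e2: "u + t * sin b - (v + t * cos b) * tan a = (u - v*tan a) - t * km a b"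
      by (simp add: km_def algebra_simps)
    have Ti: "T \<le> t \<longleftrightarrow> ?y \<le> (u + v*tan a) + t * kp a b"
      using kpos by (simp add: T_def pos_divide_le_eq algebra_simps)
    have eq: "(0 \<le> t \<and> (u + t * (sgn ?y * sin b), v + t * cos b) \<in> FCs a x (Suc i)) \<longleftrightarrow>
      (0 \<le> t \<and> 0 \<le> v + t * cos b \<and> ?y \<le> (u + v*tan a) + t * kp a b \<and>
        (u - v*tan a) - t * km a b \<le> Min (x`{..i}))"
      unfolding FCs_iff Max_Suc Min_Suc mn mx sg mult_1_left e1 e2 by (rule refl)
    show ?thesis
    proof
      assume "0 \<le> t \<and> (u + t * (sgn ?y * sin b), v + t * cos b) \<in> FCs a x (Suc i)"
      then show "T \<le> t" using eq Ti by blast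
    next
      assume Tt: "T \<le> t"
      then have t0: "0 \<le> t" using Tpos by linarith
      have "0 \<le> t * km a b" using t0 kmnn by simp
      moreover have "0 \<le> t * cos b" using t0 cb by simp
      ultimately have "(u - v*tan a) - t * km a b \<le> Min (x`{..i})" "0 \<le> v + t * cos b"
        using fe by linarith+
      then show "0 \<le> t \<and> (u + t * (sgn ?y * sin b), v + t * cos b) \<in> FCs a x (Suc i)"
        using eq Ti Tt t0 by blast
    qed
  qed
  have S: "{t. 0 \<le> t \<and> (u + t * (sgn ?y * sin b), v + t * cos b) \<in> FCs a x (Suc i)} = {T..}"
    using mem by auto
  show ?thesis unfolding hedge_unfold[OF H] S using notin sg by (simp add: T_def)
qed

lemma hedge_stay:
  assumes H: "hedge a b x i = (u,v)" and "(u,v) \<in> FCs a x (Suc i)"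
  shows "hedge a b x (Suc i) = (u,v)"
  using assms by (simp add: hedge_unfold[OF H])

lemma hedge_left:
  assumes kpos: "0 < kp a b" and kmnn: "0 \<le> km a b" and cb: "0 \<le> cos b"
    and H: "hedge a b x i = (u,v)" and feas: "(u,v) \<in> FCs a x i"
    and lt: "x (Suc i) < Min (x`{..i})" and x0: "x 0 = 0"
    and nf: "x (Suc i) < u - v * tan a"
  shows "hedge a b x (Suc i) = (u - (((u - v*tan a) - x (Suc i))/kp a b) * sin b,
                               v + (((u - v*tan a) - x (Suc i))/kp a b) * cos b)"
proof -
  let ?y = "x (Suc i)"
  have xneg: "?y < 0" using Min_le0[of x i] lt x0 by linarith
  then have sg: "sgn ?y = -1" by simp
  have notin: "(u,v) \<notin> FCs a x (Suc i)"
    using nf lt by (simp add: FCs_iff Min_Suc)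
  define T where "T = ((u - v*tan a) - ?y)/kp a b"
  have Tpos: "0 < T" using nf kpos by (simp add: T_def)
  have fe: "0 \<le> v" "Max (x`{..i}) \<le> u + v*tan a" "u - v*tan a \<le> Min (x`{..i})"
    using feas by (auto simp: FCs_iff)
  have mx: "max (Max (x`{..i})) ?y = Max (x`{..i})" using Min_le_Max[of x i] lt by (intro max_absorb1) linarith
  have mn: "min (Min (x`{..i})) ?y = ?y" using lt by (intro min_absorb2) linarith
  have mem: "0 \<le> t \<and> (u + t * (sgn ?y * sin b), v + t * cos b) \<in> FCs a x (Suc i) \<longleftrightarrow> T \<le> t" for t
  proof -
    have e1: "u + t * (-1 * sin b) + (v + t * cos b) * tan a = (u + v*tan a) + t * km a b"
      by (simp add: km_def algebra_simps)
    have e2: "u + t * (-1 * sin b) - (v + t * cos b) * tan a = (u - v*tan a) - t * kp a b"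
      by (simp add: kp_def algebra_simps)
    have Ti: "T \<le> t \<longleftrightarrow> (u - v*tan a) - t * kp a b \<le> ?y"
      using kpos by (simp add: T_def pos_divide_le_eq algebra_simps)
    have eq: "(0 \<le> t \<and> (u + t * (sgn ?y * sin b), v + t * cos b) \<in> FCs a x (Suc i)) \<longleftrightarrow>
      (0 \<le> t \<and> 0 \<le> v + t * cos b \<and> Max (x`{..i}) \<le> (u + v*tan a) + t * km a b \<and>
        (u - v*tan a) - t * kp a b \<le> ?y)"
      unfolding FCs_iff Max_Suc Min_Suc mn mx sg e1 e2 by (rule refl)
    show ?thesis
    proof
      assume "0 \<le> t \<and> (u + t * (sgn ?y * sin b), v + t * cos b) \<in> FCs a x (Suc i)"
      then show "T \<le> t" using eq Ti by blast
    next
      assume Tt: "T \<le> t"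
      then have t0: "0 \<le> t" using Tpos by linarith
      have "0 \<le> t * km a b" using t0 kmnn by simp
      moreover have "0 \<le> t * cos b" using t0 cb by simp
      ultimately have "Max (x`{..i}) \<le> (u + v*tan a) + t * km a b" "0 \<le> v + t * cos b"
        using fe by linarith+
      then show "0 \<le> t \<and> (u + t * (sgn ?y * sin b), v + t * cos b) \<in> FCs a x (Suc i)"
        using eq Ti Tt t0 by blast
    qed
  qed
  have S: "{t. 0 \<le> t \<and> (u + t * (sgn ?y * sin b), v + t * cos b) \<in> FCs a x (Suc i)} = {T..}"
    using mem by auto
  show ?thesis unfolding hedge_unfold[OF H] S using notin sg by (simp add: T_def)
qed

definition INV :: "real \<Rightarrow> real \<Rightarrow> real \<Rightarrow> real \<Rightarrow> real \<Rightarrow> real \<Rightarrow> bool" where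
  "INV P M p q h l \<longleftrightarrow> h \<le> p \<and> l \<le> q \<and> 0 \<le> P*p - M*q \<and> 0 \<le> P*q - M*p \<and>
     P*(P*p - M*q) \<le> (P^2 - M^2)*h \<and> P*(P*q - M*p) \<le> (P^2 - M^2)*l \<and> (q \<le> l \<or> p \<le> h)"

lemma INV_sym: "INV P M p q h l \<longleftrightarrow> INV P M q p l h"
  unfolding INV_def by auto

lemma INV_stay:
  assumes "INV P M p q h l" "h \<le> h'" "l \<le> l'" "h' \<le> p" "l' \<le> q" "0 \<le> P^2 - M^2"
  shows "INV P M p q h' l'"
proof -
  have "(P^2 - M^2)*h \<le> (P^2 - M^2)*h'" "(P^2 - M^2)*l \<le> (P^2 - M^2)*l'"
    using assms by (simp_all add: mult_left_mono)
  then show ?thesis using assms unfolding INV_def by auto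
qed

lemma INV_right:
  assumes I: "INV P M p q h l" and P: "0 < P" and M: "0 \<le> M" "M \<le> P"
    and T: "0 \<le> T" "T * P = y - p" and hy: "h \<le> y"
  shows "INV P M y (q + T*M) y l"
proof -
  have pp: "y = p + T*P" using T by simp
  have V: "P*(q + T*M) - M*y = P*q - M*p" unfolding pp by (simp add: algebra_simps)
  have U: "P*y - M*(q + T*M) = (P*p - M*q) + T*(P^2 - M^2)" unfolding pp by (simp add: algebra_simps power2_eq_square)
  have PM: "0 \<le> P^2 - M^2" using M P by (simp add: abs_le_square_iff power_mono)
  have "0 \<le> T*(P^2 - M^2)" using T PM by simp
  have "P*(P*y - M*(q + T*M)) = (P^2 - M^2)*y - M*(P*(q + T*M) - M*y)"
    by (simp add: algebra_simps power2_eq_square)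
  moreover have "0 \<le> M*(P*(q + T*M) - M*y)" using V I M unfolding INV_def by simp
  moreover have "q \<le> q + T*M" using T M by simp
  ultimately show ?thesis using I U V \<open>0 \<le> T*(P^2 - M^2)\<close> unfolding INV_def by auto
qed

lemma INV_left:
  assumes I: "INV P M p q h l" and P: "0 < P" and M: "0 \<le> M" "M \<le> P"
    and T: "0 \<le> T" "T * P = y - q" and hy: "l \<le> y"
  shows "INV P M (p + T*M) y h y"
  using INV_right[of P M q p l h T y] assms INV_sym by blast

lemma edist_ray:
  assumes "0 \<le> T" "s^2 + c^2 = 1"
  shows "edist (u,v) (u + T*s, v + T*c) = T" "edist (u,v) (u - T*s, v + T*c) = T"
proof -
  have "(u - (u + T*s))^2 + (v - (v + T*c))^2 = T^2 * (s^2 + c^2)"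
       "(u - (u - T*s))^2 + (v - (v + T*c))^2 = T^2 * (s^2 + c^2)"
    by (simp_all add: power2_eq_square algebra_simps)
  then show "edist (u,v) (u + T*s, v + T*c) = T" "edist (u,v) (u - T*s, v + T*c) = T"
    using assms by (simp_all add: edist_def)
qed

context
  fixes a b :: real
  assumes ab: "0 < a" "a < pi/2" "0 \<le> b" "b \<le> a"
begin

lemma ta_pos: "0 < tan a" using ab by (simp add: tan_gt_zero)
lemma cb_pos: "0 < cos b" using ab by (intro cos_gt_zero_pi) auto
lemma sb_nn: "0 \<le> sin b" using ab by (intro sin_ge_zero) auto
lemma kp_pos: "0 < kp a b" unfolding kp_def using ta_pos cb_pos sb_nn by (simp add: add_nonneg_pos)
lemma km_nn: "0 \<le> km a b"
proof -
  have "tan b \<le> tan a" using ab by (intro tan_mono_le) auto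
  then have "sin b / cos b \<le> tan a" by (simp add: tan_def)
  then show ?thesis using cb_pos by (simp add: km_def pos_divide_le_eq mult.commute)
qed
lemma km_le: "km a b \<le> kp a b" using sb_nn by (simp add: km_def kp_def)
lemma PM_nn: "0 \<le> (kp a b)^2 - (km a b)^2"
  using km_nn km_le by (simp add: power_mono)

lemma hedge_inv:
  assumes x0: "x 0 = 0" and nr: "\<forall>i<n. \<not> redundant x i"
  shows "i \<le> n \<Longrightarrow> hedge a b x i = (u,v) \<Longrightarrow> 0 \<le> v \<and> cost (hedge a b x) i * cos b = v \<and>
     INV (kp a b) (km a b) (u + v*tan a) (v*tan a - u) (Max (x`{..i})) (- Min (x`{..i}))"
proof (induction i arbitrary: u v)
  case 0
  then have "u = 0" "v = 0" by auto
  then show ?case using x0 by (simp add: cost_def INV_def)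
next
  case (Suc i)
  obtain u0 v0 where H0: "hedge a b x i = (u0,v0)" by (cases "hedge a b x i")
  have IH: "0 \<le> v0" "cost (hedge a b x) i * cos b = v0"
    "INV (kp a b) (km a b) (u0 + v0*tan a) (v0*tan a - u0) (Max (x`{..i})) (- Min (x`{..i}))"
    using Suc.IH[OF _ H0] Suc.prems by auto
  let ?P = "kp a b" and ?M = "km a b" and ?y = "x (Suc i)"
  let ?h = "Max (x`{..i})" and ?l = "- Min (x`{..i})"
  have hl: "?h \<le> u0 + v0*tan a" "?l \<le> v0*tan a - u0" using IH(3) unfolding INV_def by auto
  have feas0: "(u0,v0) \<in> FCs a x i" unfolding FCs_iff using hl IH(1) by (intro conjI) linarith+
  have nred: "?y < Min (x`{..i}) \<or> ?h < ?y"
  proof -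
    have "i < n" using Suc.prems(1) by simp
    then have "\<not> (Min (x`{..i}) \<le> ?y \<and> ?y \<le> ?h)" using nr unfolding redundant_def by blast
    then show ?thesis by linarith
  qed
  have cSuc: "cost (hedge a b x) (Suc i) = cost (hedge a b x) i + edist (u0,v0) (u,v)"
    using Suc.prems(2) H0 by (simp add: cost_Suc)
  have sc: "(sin b)^2 + (cos b)^2 = 1" by simp
  show ?case
  proof (cases "(u0,v0) \<in> FCs a x (Suc i)")
    case True
    then have uv: "u = u0" "v = v0" using hedge_stay[OF H0 True] Suc.prems(2) by auto
    have f: "Max (x`{..Suc i}) \<le> u0 + v0*tan a" "- Min (x`{..Suc i}) \<le> v0*tan a - u0"
      using True[unfolded FCs_iff] by linarith+
    have "INV ?P ?M (u0 + v0*tan a) (v0*tan a - u0) (Max (x`{..Suc i})) (- Min (x`{..Suc i}))"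
      by (rule INV_stay[OF IH(3) _ _ f PM_nn]) (auto simp: Max_Suc Min_Suc)
    then show ?thesis using uv IH cSuc by (simp add: edist_def)
  next
    case False
    from nred show ?thesis
    proof
      assume lt: "?y < Min (x`{..i})"
      have nf: "?y < u0 - v0 * tan a"
      proof (rule ccontr)
        assume "\<not> ?y < u0 - v0 * tan a"
        then have "(u0,v0) \<in> FCs a x (Suc i)" using hl IH(1) lt
          by (simp add: FCs_iff Max_Suc Min_Suc) (use Min_le_Max[of x i] hl lt in linarith)
        then show False using False by simp
      qed
      define T where "T = ((u0 - v0*tan a) - ?y)/?P"
      have T0: "0 \<le> T" using nf kp_pos by (simp add: T_def)
      have TP: "T * ?P = (- ?y) - (v0*tan a - u0)" using kp_pos by (simp add: T_def)
      have H1: "hedge a b x (Suc i) = (u0 - T * sin b, v0 + T * cos b)"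
        using hedge_left[OF kp_pos km_nn less_imp_le[OF cb_pos] H0 feas0 lt x0 nf] by (simp add: T_def)
      then have uv: "u = u0 - T * sin b" "v = v0 + T * cos b" using Suc.prems(2) by auto
      have ed: "edist (u0,v0) (u,v) = T" unfolding uv using edist_ray(2)[OF T0 sc] .
      have pe: "u + v*tan a = (u0 + v0*tan a) + T * ?M" "v*tan a - u = - ?y"
        using TP unfolding uv by (simp_all add: km_def kp_def algebra_simps)
      have "INV ?P ?M ((u0 + v0*tan a) + T * ?M) (- ?y) ?h (- ?y)"
        by (rule INV_left[OF IH(3) kp_pos km_nn km_le T0 TP]) (use lt in linarith)
      moreover have "Max (x`{..Suc i}) = ?h" unfolding Max_Suc
        using lt Min_le_Max[of x i] by (intro max_absorb1) linarith
      moreover have "Min (x`{..Suc i}) = ?y" unfolding Min_Suc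
        using lt by (intro min_absorb2) linarith
      ultimately have "INV ?P ?M (u + v*tan a) (v*tan a - u) (Max (x`{..Suc i})) (- Min (x`{..Suc i}))"
        using pe by simp
      moreover have "0 \<le> v" using uv IH(1) T0 cb_pos by simp
      moreover have "cost (hedge a b x) (Suc i) * cos b = v"
        using cSuc ed IH(2) uv by (simp add: algebra_simps)
      ultimately show ?thesis by blast
    next
      assume gt: "?h < ?y"
      have nf: "u0 + v0 * tan a < ?y"
      proof (rule ccontr)
        assume "\<not> u0 + v0 * tan a < ?y"
        then have "(u0,v0) \<in> FCs a x (Suc i)" using hl IH(1) gt
          by (simp add: FCs_iff Max_Suc Min_Suc) (use Min_le_Max[of x i] hl gt in linarith)
        then show False using False by simp
      qed
      define T where "T = (?y - (u0 + v0*tan a))/?P"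
      have T0: "0 \<le> T" using nf kp_pos by (simp add: T_def)
      have TP: "T * ?P = ?y - (u0 + v0*tan a)" using kp_pos by (simp add: T_def)
      have H1: "hedge a b x (Suc i) = (u0 + T * sin b, v0 + T * cos b)"
        using hedge_right[OF kp_pos km_nn less_imp_le[OF cb_pos] H0 feas0 gt x0 nf] by (simp add: T_def)
      then have uv: "u = u0 + T * sin b" "v = v0 + T * cos b" using Suc.prems(2) by auto
      have ed: "edist (u0,v0) (u,v) = T" unfolding uv using edist_ray(1)[OF T0 sc] .
      have pe: "u + v*tan a = ?y" "v*tan a - u = (v0*tan a - u0) + T * ?M"
        using TP unfolding uv by (simp_all add: km_def kp_def algebra_simps)
      have "INV ?P ?M ?y ((v0*tan a - u0) + T * ?M) ?y ?l"
        by (rule INV_right[OF IH(3) kp_pos km_nn km_le T0 TP]) (use gt in linarith)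
      moreover have "Max (x`{..Suc i}) = ?y" unfolding Max_Suc
        using gt by (intro max_absorb2) linarith
      moreover have "Min (x`{..Suc i}) = Min (x`{..i})" unfolding Min_Suc
        using gt Min_le_Max[of x i] by (intro min_absorb1) linarith
      ultimately have "INV ?P ?M (u + v*tan a) (v*tan a - u) (Max (x`{..Suc i})) (- Min (x`{..Suc i}))"
        using pe by simp
      moreover have "0 \<le> v" using uv IH(1) T0 cb_pos by simp
      moreover have "cost (hedge a b x) (Suc i) * cos b = v"
        using cSuc ed IH(2) uv by (simp add: algebra_simps)
      ultimately show ?thesis by blast
    qed
  qed
qed

end


lemma final_arith:
  assumes I: "INV P M p q h 1" and P: "0 < P" and M: "0 \<le> M" "M \<le> P" and h: "0 \<le> h" "h \<le> 1"
  shows "P^2 * (p + q) \<le> (P + M) * (P + (P - M) * h)"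
proof -
  define U where "U = P*p - M*q"
  define V where "V = P*q - M*p"
  have I': "P*U \<le> (P^2 - M^2)*h" "P*V \<le> (P^2 - M^2)*1" "q \<le> 1 \<or> p \<le> h"
    using I unfolding INV_def U_def V_def by auto
  have tgt: "(P + M) * (P + (P - M) * h) = P^2 + P*M + (P^2 - M^2)*h"
    by (simp add: algebra_simps power2_eq_square)
  from I'(3) show ?thesis
  proof
    assume q1: "q \<le> 1"
    have "P^2 * (p + q) = P*U + (P*M + P^2) * q" by (simp add: U_def algebra_simps power2_eq_square)
    also have "\<dots> \<le> (P^2 - M^2)*h + (P*M + P^2) * 1"
      using I'(1) q1 P M by (intro add_mono mult_left_mono) auto
    finally show ?thesis unfolding tgt by simp
  next
    assume ph: "p \<le> h"
    have "P^2 * (p + q) = P*V + (P*M + P^2) * p" by (simp add: V_def algebra_simps power2_eq_square)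
    also have "\<dots> \<le> (P^2 - M^2)*1 + (P*M + P^2) * h"
      using I'(2) ph P M by (intro add_mono mult_left_mono) auto
    also have "\<dots> \<le> P^2 + P*M + (P^2 - M^2)*h"
    proof -
      have "0 \<le> M*(P+M)*(1 - h)" using M P h by simp
      then show ?thesis by (simp add: algebra_simps power2_eq_square)
    qed
    finally show ?thesis unfolding tgt by simp
  qed
qed

lemma geo_apex:
  fixes s c t u v h :: real
  assumes s: "0 < s" and c: "0 < c" and sc: "s^2 + c^2 = 1" and tc: "t * c = s"
    and f1: "h \<le> u + v*t" and f2: "1 \<le> v*t - u" and h: "0 \<le> h" "h \<le> 1" and ap: "0 \<le> h + c^2 - s^2"
  shows "1 + h^2 + 2*(c^2 - s^2)*h \<le> 4 * s^2 * (u^2 + v^2)"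
proof -
  define S where "S = s^2*(h-1)^2 + c^2*(h+1)^2"
  have S1: "S = 1 + h^2 + 2*(c^2 - s^2)*h"
  proof -
    have "S = (s^2 + c^2)*(1 + h^2) + 2*(c^2 - s^2)*h" by (simp add: S_def algebra_simps power2_eq_square)
    then show ?thesis using sc by simp
  qed
  define w where "w = v*t"
  define aP where "aP = s*(h-1)*u + c*(h+1)*v"
  have vs: "c*v*s = c^2 * w" using tc by (simp add: w_def power2_eq_square algebra_simps)
  have id: "2*s*aP - S = (w - u - 1)*(c^2*(h+1) - s^2*(h-1)) + (w + u - h)*(c^2*(h+1) + s^2*(h-1))"
  proof -
    have "2*s*aP = 2*s^2*(h-1)*u + 2*(h+1)*(c*v*s)" by (simp add: aP_def power2_eq_square algebra_simps)
    also have "\<dots> = 2*s^2*(h-1)*u + 2*(h+1)*(c^2*w)" using vs by simp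
    finally show ?thesis by (simp add: S_def power2_eq_square algebra_simps)
  qed
  have n1: "0 \<le> (w - u - 1)*(c^2*(h+1) - s^2*(h-1))"
  proof -
    have "0 \<le> c^2*(h+1)" using h by simp
    moreover have "s^2*(h-1) \<le> 0" using h by (simp add: mult_nonneg_nonpos)
    ultimately show ?thesis using f2 unfolding w_def by (intro mult_nonneg_nonneg) auto
  qed
  have n2: "0 \<le> (w + u - h)*(c^2*(h+1) + s^2*(h-1))"
  proof -
    have "c^2*(h+1) + s^2*(h-1) = (s^2+c^2)*h + c^2 - s^2" by (simp add: algebra_simps)
    then have "c^2*(h+1) + s^2*(h-1) = h + c^2 - s^2" using sc by simp
    then show ?thesis using f1 ap unfolding w_def by (intro mult_nonneg_nonneg) auto
  qed
  have Spos: "0 < S" unfolding S_def using c h by (simp add: add_nonneg_pos)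
  have key: "S \<le> 2*s*aP" using id n1 n2 by linarith
  have cs: "aP^2 \<le> S * (u^2 + v^2)"
  proof -
    have "S * (u^2 + v^2) - aP^2 = (s*(h-1)*v - c*(h+1)*u)^2"
      by (simp add: S_def aP_def power2_eq_square algebra_simps)
    then show ?thesis by (metis diff_ge_0_iff_ge zero_le_power2)
  qed
  have "S^2 \<le> (2*s*aP)^2" using key Spos by (intro power_mono) auto
  also have "\<dots> = 4*s^2*aP^2" by (simp add: power2_eq_square)
  also have "\<dots> \<le> 4*s^2*(S * (u^2 + v^2))" using cs by (intro mult_left_mono) auto
  finally have "S * S \<le> S * (4*s^2*(u^2 + v^2))" by (simp add: power2_eq_square algebra_simps)
  then have "S \<le> 4*s^2*(u^2 + v^2)" using Spos by simp
  then show ?thesis using S1 by simp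
qed

lemma geo_side:
  fixes s c t u v :: real
  assumes c: "0 < c" and sc: "s^2 + c^2 = 1" and tc: "t * c = s" and f2: "1 \<le> v*t - u"
  shows "c^2 \<le> u^2 + v^2"
proof -
  have "c \<le> c*(v*t - u)" using c f2 by simp
  also have "\<dots> = v*s - u*c" using tc by (simp add: algebra_simps)
  finally have e: "c \<le> v*s - u*c" .
  have "(v*s - u*c)^2 \<le> (u^2 + v^2)*(s^2 + c^2)"
  proof -
    have "(u^2 + v^2)*(s^2 + c^2) - (v*s - u*c)^2 = (u*s + v*c)^2"
      by (simp add: power2_eq_square algebra_simps)
    then show ?thesis by (metis diff_ge_0_iff_ge zero_le_power2)
  qed
  moreover have "c^2 \<le> (v*s - u*c)^2" using e c by (intro power_mono) auto
  ultimately show ?thesis using sc by simp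
qed

lemma g_ident:
  fixes A B r :: real
  shows "4*(1 - A*B + A^2)*(1 + r^2 + B*r) - (4 - B^2)*(1 + A*r)^2 = ((2 - A*B)*r - (2*A - B))^2"
  by (simp add: power2_eq_square algebra_simps)



lemma g_max:
  fixes A B R r :: real
  assumes B: "\<bar>B\<bar> < 2" and D: "0 < 2 - A*B" and R: "R = (2*A - B)/(2 - A*B)" and R1: "0 \<le> 1 + A*R"
  shows "(1 + A*r) * sqrt (1 + R^2 + B*R) \<le> (1 + A*R) * sqrt (1 + r^2 + B*r)"
proof -
  have B4: "0 < 4 - B^2"
  proof -
    have "\<bar>B\<bar>*\<bar>B\<bar> < 2*2" using B by (intro mult_strict_mono) auto
    then show ?thesis by (simp add: power2_eq_square)
  qed
  have Spos: "0 < 1 + z^2 + B*z" for z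
  proof -
    have "4*(1 + z^2 + B*z) = (2*z + B)^2 + (4 - B^2)" by (simp add: power2_eq_square algebra_simps)
    moreover have "0 < (2*z + B)^2 + (4 - B^2)" by (rule add_nonneg_pos[OF zero_le_power2 B4])
    ultimately have "0 < 4*(1 + z^2 + B*z)" by simp
    then show ?thesis by simp
  qed
  define E where "E = 1 - A*B + A^2"
  have Epos: "0 < E"
  proof -
    have "4*E = (2*A - B)^2 + (4 - B^2)" by (simp add: E_def power2_eq_square algebra_simps)
    moreover have "0 < (2*A - B)^2 + (4 - B^2)" by (rule add_nonneg_pos[OF zero_le_power2 B4])
    ultimately have "0 < 4*E" by simp
    then show ?thesis by simp
  qed
  have R0: "(2 - A*B)*R - (2*A - B) = 0" using R D by simp
  have eR: "4*E*(1 + R^2 + B*R) = (4 - B^2)*(1 + A*R)^2"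
    using g_ident[of A B R] R0 unfolding E_def by simp
  have er: "(4 - B^2)*(1 + A*r)^2 \<le> 4*E*(1 + r^2 + B*r)"
  proof -
    have "0 \<le> ((2 - A*B)*r - (2*A - B))^2" by simp
    then show ?thesis using g_ident[of A B r] unfolding E_def by linarith
  qed
  show ?thesis
  proof (cases "1 + A*r \<le> 0")
    case True
    have "(1 + A*r) * sqrt (1 + R^2 + B*R) \<le> 0" by (rule mult_nonpos_nonneg[OF True]) (use Spos[of R] in simp)
    moreover have "0 \<le> (1 + A*R) * sqrt (1 + r^2 + B*r)" using R1 Spos[of r] by simp
    ultimately show ?thesis by linarith
  next
    case False
    have "(1 + A*r)^2 * (4*E*(1 + R^2 + B*R)) \<le> (1 + A*R)^2 * (4*E*(1 + r^2 + B*r))"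
    proof -
      have "(1 + A*r)^2 * (4*E*(1 + R^2 + B*R)) = (1 + A*R)^2 * ((4 - B^2)*(1 + A*r)^2)"
        using eR by simp
      also have "\<dots> \<le> (1 + A*R)^2 * (4*E*(1 + r^2 + B*r))"
        using er by (intro mult_left_mono) auto
      finally show ?thesis .
    qed
    then have "4*E*((1 + A*r)^2 * (1 + R^2 + B*R)) \<le> 4*E*((1 + A*R)^2 * (1 + r^2 + B*r))"
      by (simp add: algebra_simps)
    then have sq: "(1 + A*r)^2 * (1 + R^2 + B*R) \<le> (1 + A*R)^2 * (1 + r^2 + B*r)"
      using Epos by simp
    have "(1 + A*r) * sqrt (1 + R^2 + B*R) = sqrt ((1 + A*r)^2 * (1 + R^2 + B*R))"
      using False by (simp add: real_sqrt_mult)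
    also have "\<dots> \<le> sqrt ((1 + A*R)^2 * (1 + r^2 + B*r))" using sq by simp
    also have "\<dots> = (1 + A*R) * sqrt (1 + r^2 + B*r)" using R1 by (simp add: real_sqrt_mult)
    finally show ?thesis .
  qed
qed

lemma FCs_mono: "i \<le> j \<Longrightarrow> FCs a x j \<subseteq> FCs a x i"
  unfolding FCs_def by auto


lemma cost_nonneg: "0 \<le> cost P n"
  unfolding cost_def edist_def by (intro sum_nonneg) simp

lemma cost_const:
  assumes "1 \<le> k"
  shows "cost (\<lambda>i. if i = 0 then (0,0) else p) k = edist (0,0) p"
  using assms
proof (induction k)
  case 0 then show ?case by simp
next
  case (Suc k)
  show ?case
  proof (cases "k = 0")
    case True then show ?thesis by (simp add: cost_def)
  next
    case False
    then have "cost (\<lambda>i. if i = 0 then (0,0) else p) k = edist (0,0) p" using Suc by simp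
    then show ?thesis using False by (simp add: cost_Suc edist_def)
  qed
qed

context
  fixes a b :: real
  assumes ab: "0 < a" "a < pi/2" "0 \<le> b" "b \<le> a"
begin

lemma sa_pos: "0 < sin a" using ab by (intro sin_gt_zero) auto
lemma ca_pos: "0 < cos a" using ab by (intro cos_gt_zero_pi) auto
lemma tan_ca: "tan a * cos a = sin a" using ca_pos by (simp add: tan_def)
lemma sc1: "(sin a)^2 + (cos a)^2 = 1" by simp

lemma cbt: "cos b * (tan a + tan b) = kp a b"
  using cb_pos[OF ab] ca_pos by (simp add: tan_def kp_def field_simps)

lemma A_eq: "2*tan b/(tan a + tan b) = 2*sin b/kp a b"
proof -
  have "tan a + tan b = kp a b / cos b" using cbt cb_pos[OF ab] by (simp add: field_simps)
  then show ?thesis using cb_pos[OF ab] kp_pos[OF ab] by (simp add: tan_def field_simps)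
qed

lemma f1_eq: "f1 a b r = 2*sin a/kp a b * ((1 + (2*sin b/kp a b)*r)/sqrt (1 + r^2 + 2*cos(2*a)*r))"
  unfolding f1_def A_eq cbt ..

lemma r0_eq: "r0 a b = (2*(2*sin b/kp a b) - 2*cos(2*a))/(2 - (2*sin b/kp a b)*(2*cos(2*a)))"
  unfolding r0_def Let_def A_eq ..

lemma A_rng: "0 \<le> 2*sin b/kp a b" "2*sin b/kp a b \<le> 1"
proof -
  show "0 \<le> 2*sin b/kp a b" using sb_nn[OF ab] kp_pos[OF ab] by simp
  have "2*sin b \<le> kp a b" using km_nn[OF ab] by (simp add: km_def kp_def)
  then show "2*sin b/kp a b \<le> 1" using kp_pos[OF ab] by simp
qed

lemma cos2a: "cos (2*a) = (cos a)^2 - (sin a)^2" by (rule cos_double)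

lemma B_rng: "\<bar>2*cos(2*a)\<bar> < 2"
proof -
  have "0 < (sin a)^2" "0 < (cos a)^2" using sa_pos ca_pos by auto
  then have "\<bar>(cos a)^2 - (sin a)^2\<bar> < 1" unfolding abs_less_iff using sc1 by (intro conjI) linarith+
  then show ?thesis unfolding cos2a by simp
qed

lemma cost_upper:
  assumes g: "good_input x n"
  shows "(kp a b)^2 * cost (hedge a b x) n \<le> kp a b + 2*sin b*Max (x`{..n})"
proof -
  obtain u v where H: "hedge a b x n = (u,v)" by (cases "hedge a b x n")
  have x0: "x 0 = 0" and nr: "\<forall>i<n. \<not> redundant x i" and mn: "Min (x`{..n}) = -1"
    and mx: "0 \<le> Max (x`{..n})" "Max (x`{..n}) \<le> 1"
    using g unfolding good_input_def by auto
  have hi: "0 \<le> v" "cost (hedge a b x) n * cos b = v"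
    "INV (kp a b) (km a b) (u + v*tan a) (v*tan a - u) (Max (x`{..n})) 1"
    using hedge_inv[OF ab x0 nr order.refl H] mn by auto
  have fa: "(kp a b)^2 * ((u + v*tan a) + (v*tan a - u)) \<le> (kp a b + km a b) * (kp a b + (kp a b - km a b) * Max (x`{..n}))"
    by (rule final_arith[OF hi(3) kp_pos[OF ab] km_nn[OF ab] km_le[OF ab] mx])
  have e1: "(u + v*tan a) + (v*tan a - u) = (2*cos b*tan a) * cost (hedge a b x) n"
    using hi(2) by (simp add: algebra_simps)
  have e2: "kp a b + km a b = 2*cos b*tan a" "kp a b - km a b = 2*sin b" by (simp_all add: kp_def km_def)
  have pos: "0 < 2*cos b*tan a" using cb_pos[OF ab] ta_pos[OF ab] by simp
  have "(2*cos b*tan a) * ((kp a b)^2 * cost (hedge a b x) n) \<le> (2*cos b*tan a) * (kp a b + 2*sin b*Max (x`{..n}))"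
    using fa unfolding e1 e2 by (simp add: algebra_simps)
  then show ?thesis using pos by (rule mult_left_le_imp_le)
qed

lemma hedge_solution:
  assumes g: "good_input x n"
  shows "solution a x n (hedge a b x)"
proof -
  have x0: "x 0 = 0" and nr: "\<forall>i<n. \<not> redundant x i" using g unfolding good_input_def by auto
  have "hedge a b x i \<in> FCs a x i" if "i \<le> n" for i
  proof -
    obtain u v where H: "hedge a b x i = (u,v)" by (cases "hedge a b x i")
    have "0 \<le> v" "INV (kp a b) (km a b) (u + v*tan a) (v*tan a - u) (Max (x`{..i})) (- Min (x`{..i}))"
      using hedge_inv[OF ab x0 nr that H] by auto
    then show ?thesis unfolding H FCs_iff INV_def by auto
  qed
  then show ?thesis unfolding solution_def by simp
qed

lemma OPT_ge:
  assumes g: "good_input x n" and D: "\<And>u v. (u,v) \<in> FCs a x n \<Longrightarrow> d \<le> sqrt (u^2 + v^2)"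
  shows "d \<le> OPT a x n"
  unfolding OPT_def
proof (rule cInf_greatest)
  show "{cost P n |P. solution a x n P} \<noteq> {}" using hedge_solution[OF g] by blast
next
  fix c assume "c \<in> {cost P n |P. solution a x n P}"
  then obtain P where c: "c = cost P n" and sol: "solution a x n P" by blast
  obtain u v where Pn: "P n = (u,v)" by (cases "P n")
  have "(u,v) \<in> FCs a x n" using sol Pn unfolding solution_def by auto
  then have "d \<le> sqrt (u^2 + v^2)" by (rule D)
  also have "\<dots> = edist (P 0) (P n)" using sol Pn unfolding solution_def by (simp add: edist_def)
  also have "\<dots> \<le> c" unfolding c by (rule cost_ge)
  finally show "d \<le> c" .
qed

lemma OPT_le:
  assumes g: "good_input x n" and p: "p \<in> FCs a x n"
  shows "OPT a x n \<le> edist (0,0) p"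
proof -
  define Q where "Q = (\<lambda>i::nat. if i = 0 then ((0::real),(0::real)) else p)"
  have n1: "1 \<le> n" and x0: "x 0 = 0" using g unfolding good_input_def by auto
  have "Q i \<in> FCs a x i" if "i \<le> n" for i
  proof (cases "i = 0")
    case True
    then show ?thesis using x0 by (simp add: Q_def FCs_def FC_def)
  next
    case False
    then show ?thesis using p FCs_mono[OF that, of a x] by (auto simp: Q_def)
  qed
  then have sol: "solution a x n Q" unfolding solution_def by (simp add: Q_def)
  have "OPT a x n \<le> cost Q n" unfolding OPT_def
  proof (rule cInf_lower)
    show "cost Q n \<in> {cost P n |P. solution a x n P}" using sol by blast
    show "bdd_below {cost P n |P. solution a x n P}"
      by (rule bdd_belowI[of _ 0]) (auto simp: cost_nonneg)
  qed
  also have "cost Q n = edist (0,0) p" unfolding Q_def by (rule cost_const[OF n1])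
  finally show ?thesis .
qed

end


lemma apex_edist:
  fixes a M :: real
  assumes "0 < a" "a < pi/2"
  shows "edist (0,0) ((M-1)/2, (M+1)/(2*tan a)) = sqrt (1 + M^2 + 2*cos(2*a)*M) / (2*sin a)"
proof -
  have s: "0 < sin a" using assms by (intro sin_gt_zero) auto
  have c: "0 < cos a" using assms by (intro cos_gt_zero_pi) auto
  have t: "tan a = sin a / cos a" by (simp add: tan_def)
  have id: "s^2*(M-1)^2 + c^2*(M+1)^2 = (s^2 + c^2)*(1 + M^2) + 2*(c^2 - s^2)*M" for s c :: real
    by (simp add: algebra_simps power2_eq_square)
  have "((M-1)/2)^2 + ((M+1)/(2*tan a))^2 = ((sin a)^2*(M-1)^2 + (cos a)^2*(M+1)^2) / (2*sin a)^2"
    unfolding t using s c by (simp add: field_simps power2_eq_square)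
  also have "(sin a)^2*(M-1)^2 + (cos a)^2*(M+1)^2 = ((sin a)^2 + (cos a)^2)*(1 + M^2) + 2*((cos a)^2 - (sin a)^2)*M"
    by (rule id)
  also have "\<dots> = 1 + M^2 + 2*cos(2*a)*M" by (simp only: sin_cos_squared_add cos_double) simp
  finally have e: "((M-1)/2)^2 + ((M+1)/(2*tan a))^2 = (1 + M^2 + 2*cos(2*a)*M) / (2*sin a)^2" .
  have "edist (0,0) ((M-1)/2, (M+1)/(2*tan a)) = sqrt (((M-1)/2)^2 + ((M+1)/(2*tan a))^2)"
    by (simp add: edist_def power2_eq_square)
  also have "\<dots> = sqrt (1 + M^2 + 2*cos(2*a)*M) / (2*sin a)"
  proof -
    have "sqrt ((2*sin a)^2) = 2*sin a" by (subst real_sqrt_abs) (use s in simp)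
    then show ?thesis unfolding e real_sqrt_divide by simp
  qed
  finally show ?thesis .
qed

lemma tfun_tan:
  fixes a :: real
  assumes "0 < a" "a < pi/2"
  shows "tan (tfun a) = tan a * cos (2*a) / (2 - cos (2*a))"
proof -
  have s: "0 < sin a" using assms by (intro sin_gt_zero) auto
  have c: "0 < cos a" using assms by (intro cos_gt_zero_pi) auto
  have c2: "cos (2*a) = 2*(cos a)^2 - 1" by (rule cos_double_cos)
  have c2': "cos (2*a) = (cos a)^2 - (sin a)^2" by (rule cos_double)
  have "sin (3*a) = sin (2*a + a)" by simp
  also have "\<dots> = sin (2*a) * cos a + cos (2*a) * sin a" by (rule sin_add)
  finally have s3: "sin (3*a) - sin a = 2*sin a*cos (2*a)"
  proof -
    assume e: "sin (3*a) = sin (2*a) * cos a + cos (2*a) * sin a"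
    have "sin (3*a) - sin a = sin a * (2*(cos a)^2 + cos (2*a) - 1)"
      unfolding e sin_double by (simp add: algebra_simps power2_eq_square)
    also have "2*(cos a)^2 + cos (2*a) - 1 = 2*cos (2*a)" using c2 by simp
    finally show ?thesis by simp
  qed
  have c3: "3*cos a - cos (3*a) = 2*cos a*(2 - cos (2*a))"
    unfolding cos_treble_cos c2 by (simp add: algebra_simps power2_eq_square power3_eq_cube)
  have pos: "0 < 2 - cos (2*a)" using cos_le_one[of "2*a"] by linarith
  have "tan (tfun a) = (sin (3*a) - sin a) / (3*cos a - cos (3*a))"
    unfolding tfun_def tan_arctan ..
  also have "\<dots> = tan a * cos (2*a) / (2 - cos (2*a))"
    unfolding s3 c3 tan_def using c pos by (simp add: field_simps)
  finally show ?thesis .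
qed

theorem lemma8:
  fixes \<alpha> \<beta> :: real
  assumes "(0 < \<alpha> \<and> \<alpha> \<le> pi/4 \<and> tfun \<alpha> \<le> \<beta> \<and> \<beta> \<le> \<alpha>)
         \<or> (pi/4 \<le> \<alpha> \<and> \<alpha> < pi/2 \<and> 0 \<le> \<beta> \<and> \<beta> \<le> \<alpha>)"
  shows "hedge_ratio \<alpha> \<beta> = ereal (f1 \<alpha> \<beta> (r0 \<alpha> \<beta>))"
proof -
  define a where "a = \<alpha>"
  define b where "b = \<beta>"
  have asm: "(0 < a \<and> a \<le> pi/4 \<and> tfun a \<le> b \<and> b \<le> a) \<or> (pi/4 \<le> a \<and> a < pi/2 \<and> 0 \<le> b \<and> b \<le> a)"
    using assms unfolding a_def b_def .
  have ab0: "0 < a" "a < pi/2" "b \<le> a" using asm pi_gt_zero by auto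
  have b0: "0 \<le> b"
    using asm
  proof
    assume h: "0 < a \<and> a \<le> pi/4 \<and> tfun a \<le> b \<and> b \<le> a"
    have "0 \<le> cos (2*a)" using h by (intro cos_ge_zero) auto
    moreover have "0 < 2 - cos (2*a)" using cos_le_one[of "2*a"] by linarith
    moreover have "0 < tan a" using ab0 by (simp add: tan_gt_zero)
    ultimately have "0 \<le> tan (tfun a)" unfolding tfun_tan[OF ab0(1,2)] by simp
    then have "0 \<le> tfun a" unfolding tfun_def tan_arctan by simp
    then show ?thesis using h by linarith
  qed auto
  note ab = ab0(1,2) b0 ab0(3)
  define P where "P = kp a b"
  define A where "A = 2*sin b/P"
  define B where "B = 2*cos(2*a)"
  define R where "R = (2*A - B)/(2 - A*B)"
  define S where "S = (\<lambda>r::real. 1 + r^2 + B*r)"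
  define F where "F = f1 a b R"
  have Ppos: "0 < P" unfolding P_def using kp_pos[OF ab] .
  have A01: "0 \<le> A" "A \<le> 1" unfolding A_def P_def using A_rng[OF ab] by auto
  have B2: "\<bar>B\<bar> < 2" unfolding B_def using B_rng[OF ab] .
  have Dpos: "0 < 2 - A*B"
  proof -
    have "A*B \<le> A*\<bar>B\<bar>" using A01 by (intro mult_left_mono) auto
    also have "\<dots> \<le> 1*\<bar>B\<bar>" using A01 by (intro mult_right_mono) auto
    finally show ?thesis using B2 by linarith
  qed
  have cb: "0 < cos b" using cb_pos[OF ab] .
  have R0: "0 \<le> R"
  proof -
    have "B \<le> 2*A"
      using asm
    proof
      assume h: "0 < a \<and> a \<le> pi/4 \<and> tfun a \<le> b \<and> b \<le> a"
      have "tan (tfun a) \<le> tan b" using h ab by (intro tan_mono_le) (auto simp: tfun_def arctan_lbound)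
      then have "tan a * cos (2*a) / (2 - cos (2*a)) \<le> sin b / cos b"
        unfolding tfun_tan[OF ab0(1,2)] by (simp add: tan_def)
      moreover have q: "0 < 2 - cos (2*a)" using cos_le_one[of "2*a"] by linarith
      ultimately have "tan a * cos (2*a) * cos b \<le> sin b * (2 - cos (2*a))"
        using cb by (simp add: field_simps)
      then have "cos (2*a) * P \<le> 2 * sin b"
        unfolding P_def kp_def by (simp add: algebra_simps)
      then have "cos (2*a) \<le> 2 * sin b / P" using Ppos by (simp add: pos_le_divide_eq)
      then show ?thesis unfolding A_def B_def by simp
    next
      assume h: "pi/4 \<le> a \<and> a < pi/2 \<and> 0 \<le> b \<and> b \<le> a"
      have "cos (2*a) \<le> cos (pi/2)" using h by (subst cos_mono_le_eq) auto
      then have "B \<le> 0" unfolding B_def by simp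
      then show ?thesis using A01 by simp
    qed
    then show ?thesis unfolding R_def using Dpos by simp
  qed
  have R1: "R \<le> 1"
  proof -
    have "2*A - B \<le> 2 - A*B"
    proof -
      have "0 \<le> (1 - A)*(2 + B)" using A01 B2 by (intro mult_nonneg_nonneg) auto
      then show ?thesis by (simp add: algebra_simps)
    qed
    then show ?thesis unfolding R_def using Dpos by simp
  qed
  have RB: "0 \<le> 2*R + B"
  proof -
    have "(2*R + B)*(2 - A*B) = A*(4 - B^2)" unfolding R_def using Dpos by (simp add: field_simps power2_eq_square)
    moreover have "0 \<le> A*(4 - B^2)"
    proof -
      have "\<bar>B\<bar>*\<bar>B\<bar> \<le> 2*2" using B2 by (intro mult_mono) auto
      then have "B^2 \<le> 4" by (simp add: power2_eq_square)
      then show ?thesis using A01 by simp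
    qed
    ultimately show ?thesis using Dpos by (metis zero_le_mult_iff not_le less_imp_le)
  qed
  have AR: "0 \<le> 1 + A*R" using A01 R0 by simp
  have Spos: "0 < S r" for r
  proof -
    have "4 * S r = (2*r + B)^2 + (4 - B^2)" unfolding S_def by (simp add: power2_eq_square algebra_simps)
    moreover have "0 < 4 - B^2"
    proof -
      have "\<bar>B\<bar>*\<bar>B\<bar> < 2*2" using B2 by (intro mult_strict_mono) auto
      then show ?thesis by (simp add: power2_eq_square)
    qed
    moreover have "0 < (2*r + B)^2 + (4 - B^2)" by (rule add_nonneg_pos[OF zero_le_power2 \<open>0 < 4 - B^2\<close>])
    ultimately have "0 < 4 * S r" by simp
    then show ?thesis by simp
  qed
  have sqpos: "0 < sqrt (S r)" for r using Spos[of r] by simp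
  have gm: "(1 + A*r) * sqrt (S R) \<le> (1 + A*R) * sqrt (S r)" for r
    unfolding S_def by (rule g_max[OF B2 Dpos R_def AR])
  have Feq: "F = 2*sin a/P * ((1 + A*R)/sqrt (S R))"
    unfolding F_def f1_eq[OF ab] S_def A_def B_def P_def by (simp add: mult.assoc)
  have Fr0: "f1 \<alpha> \<beta> (r0 \<alpha> \<beta>) = F"
    unfolding F_def a_def[symmetric] b_def[symmetric] r0_eq[OF ab] R_def A_def B_def P_def ..
  have sa: "0 < sin a" using sa_pos[OF ab] .
  have ca: "0 < cos a" using ca_pos[OF ab] .
  have Bsc: "B = 2*((cos a)^2 - (sin a)^2)" unfolding B_def cos_double ..
  have scq: "(sin a)^2 + (cos a)^2 = 1" by simp
  have Fnn: "0 \<le> F" unfolding Feq using sa Ppos AR Spos[of R] by simp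
  have upper: "0 < OPT a x n \<and> cost (hedge a b x) n / OPT a x n \<le> F" if g: "good_input x n" for x n
  proof -
    define M where "M = Max (x`{..n})"
    have M01: "0 \<le> M" "M \<le> 1" and mn: "Min (x`{..n}) = -1" using g unfolding good_input_def M_def by auto
    have cu: "cost (hedge a b x) n \<le> (1 + A*M)/P"
    proof -
      have "P^2 * cost (hedge a b x) n \<le> P + 2*sin b*M" using cost_upper[OF ab g] unfolding P_def M_def .
      then have "cost (hedge a b x) n \<le> (P + 2*sin b*M)/P^2" using Ppos by (simp add: field_simps)
      also have "\<dots> = (1 + A*M)/P" unfolding A_def using Ppos by (simp add: field_simps power2_eq_square)
      finally show ?thesis .
    qed
    have fc: "M \<le> u + v*tan a \<and> 1 \<le> v*tan a - u" if "(u,v) \<in> FCs a x n" for u v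
      using that mn unfolding FCs_iff M_def by auto
    have "\<exists>d>0. d \<le> OPT a x n \<and> (1 + A*M)/P \<le> F * d"
    proof (cases "0 \<le> 2*M + B")
      case True
      define d where "d = sqrt (S M) / (2*sin a)"
      have dpos: "0 < d" unfolding d_def using Spos[of M] sa by simp
      have "d \<le> OPT a x n"
      proof (rule OPT_ge[OF ab g])
        fix u v assume "(u,v) \<in> FCs a x n"
        then have f: "M \<le> u + v*tan a" "1 \<le> v*tan a - u" using fc by auto
        have "1 + M^2 + 2*((cos a)^2 - (sin a)^2)*M \<le> 4*(sin a)^2*(u^2 + v^2)"
          by (rule geo_apex[OF sa ca scq tan_ca[OF ab] f M01]) (use True Bsc in simp)
        then have "S M \<le> (2*sin a)^2 * (u^2 + v^2)" unfolding S_def Bsc by (simp add: power2_eq_square algebra_simps)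
        then have "sqrt (S M) \<le> sqrt ((2*sin a)^2 * (u^2 + v^2))" by simp
        also have "\<dots> = 2*sin a * sqrt (u^2 + v^2)" using sa by (simp add: real_sqrt_mult)
        finally show "d \<le> sqrt (u^2 + v^2)" unfolding d_def using sa by (simp add: field_simps)
      qed
      moreover have "(1 + A*M)/P \<le> F * d"
      proof -
        have "F * d = (1 + A*R) * sqrt (S M) / (P * sqrt (S R))"
          unfolding Feq d_def using sa Ppos sqpos[of R] by (simp add: field_simps)
        moreover have "(1 + A*M)/P = (1 + A*M) * sqrt (S R) / (P * sqrt (S R))"
          using sqpos[of R] by simp
        moreover have "(1 + A*M) * sqrt (S R) / (P * sqrt (S R)) \<le> (1 + A*R) * sqrt (S M) / (P * sqrt (S R))"
          by (rule divide_right_mono[OF gm[of M]]) (use Ppos sqpos[of R] in simp)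
        ultimately show ?thesis by simp
      qed
      ultimately show ?thesis using dpos by blast
    next
      case False
      define d where "d = cos a"
      have "d \<le> OPT a x n"
      proof (rule OPT_ge[OF ab g])
        fix u v assume "(u,v) \<in> FCs a x n"
        then have f: "1 \<le> v*tan a - u" using fc by auto
        have "(cos a)^2 \<le> u^2 + v^2" by (rule geo_side[OF ca scq tan_ca[OF ab] f])
        then show "d \<le> sqrt (u^2 + v^2)" unfolding d_def using ca by (simp add: real_le_rsqrt)
      qed
      moreover have "(1 + A*M)/P \<le> F * d"
      proof -
        define Ms where "Ms = - B/2"
        have SMs: "S Ms = (2*sin a*cos a)^2"
        proof -
          have i1: "1 + (-X/2)^2 + X*(-X/2) = 1 - X^2/4" for X :: real
            by (simp add: power2_eq_square field_simps)
          have i2: "(s^2 + c^2)^2 - (c^2 - s^2)^2 = (2*s*c)^2" for s c :: real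
            by (simp add: power2_eq_square algebra_simps)
          have i3: "(2*(c^2 - s^2))^2/4 = (c^2 - s^2)^2" for s c :: real
            by (simp add: power2_eq_square field_simps)
          have "S Ms = 1 - B^2/4" unfolding S_def Ms_def by (rule i1)
          also have "B^2/4 = ((cos a)^2 - (sin a)^2)^2" unfolding Bsc by (rule i3)
          finally have "S Ms = 1 - ((cos a)^2 - (sin a)^2)^2" .
          then have "S Ms = ((sin a)^2 + (cos a)^2)^2 - ((cos a)^2 - (sin a)^2)^2" using scq by simp
          then show ?thesis using i2[of "sin a" "cos a"] by (rule trans)
        qed
        have sq: "sqrt (S Ms) = 2*sin a*cos a" unfolding SMs using sa ca by simp
        have "1 + A*M \<le> 1 + A*Ms" using False A01 unfolding Ms_def by (intro add_left_mono mult_left_mono) auto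
        also have "(1 + A*Ms) \<le> (1 + A*R) * (2*sin a*cos a) / sqrt (S R)"
          using gm[of Ms] sqpos[of R] unfolding sq by (simp add: field_simps)
        finally have "(1 + A*M)/P \<le> (1 + A*R) * (2*sin a*cos a) / sqrt (S R) / P"
          by (rule divide_right_mono) (use Ppos in simp)
        also have "\<dots> = F * d" unfolding Feq d_def using Ppos sqpos[of R] by (simp add: field_simps)
        finally show ?thesis .
      qed
      moreover have "0 < d" unfolding d_def using ca .
      ultimately show ?thesis by blast
    qed
    then obtain d where d: "0 < d" "d \<le> OPT a x n" "(1 + A*M)/P \<le> F * d" by blast
    have Opos: "0 < OPT a x n" using d by linarith
    have "cost (hedge a b x) n \<le> F * OPT a x n"
    proof -
      have "F * d \<le> F * OPT a x n" using d Fnn by (intro mult_left_mono) auto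
      then show ?thesis using cu d by linarith
    qed
    then have "cost (hedge a b x) n / OPT a x n \<le> F" using Opos by (simp add: divide_le_eq)
    then show ?thesis using Opos by simp
  qed
  have lower_gen: "F \<le> cost (hedge a b x) n / OPT a x n"
    if g: "good_input x n" and mx: "Max (x`{..n}) = R" and cst: "cost (hedge a b x) n = (1 + A*R)/P" for x n
  proof -
    have mn: "Min (x`{..n}) = -1" using g unfolding good_input_def by auto
    have ap: "((R-1)/2, (R+1)/(2*tan a)) \<in> FCs a x n"
      unfolding FCs_iff mx mn using ta_pos[OF ab] R0 by (simp add: field_simps)
    have Ole: "OPT a x n \<le> sqrt (S R) / (2*sin a)"
      using OPT_le[OF ab g ap] apex_edist[OF ab(1,2), of R] unfolding S_def B_def by (simp add: mult.assoc)
    have Op: "0 < OPT a x n" using upper[OF g] by simp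
    have ce: "cost (hedge a b x) n = F * (sqrt (S R) / (2*sin a))"
      unfolding cst Feq using sa sqpos[of R] Ppos by (simp add: field_simps)
    have "F * OPT a x n \<le> F * (sqrt (S R) / (2*sin a))" using Ole Fnn by (rule mult_left_mono)
    then show ?thesis unfolding ce[symmetric] using Op by (simp add: pos_le_divide_eq)
  qed
  have km0: "0 \<le> km a b" using km_nn[OF ab] .
  have PmK: "P - km a b = 2*sin b" unfolding P_def by (simp add: kp_def km_def)
  have witness: "\<exists>x n. good_input x n \<and> F \<le> cost (hedge a b x) n / OPT a x n"
  proof (cases "R = 0")
    case True
    define x where "x = (\<lambda>j::nat. if j = 0 then (0::real) else -1)"
    have x0: "x 0 = 0" by (simp add: x_def)
    have i0: "x`{..0} = {0}" by (simp add: x_def)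
    have i1: "x`{..1} = {0,-1}"
    proof -
      have "{..1::nat} = {0,1}" by auto
      then show ?thesis by (auto simp: x_def)
    qed
    have g: "good_input x 1"
      unfolding good_input_def redundant_def using i0 i1 by (simp add: x_def)
    have nr: "\<forall>i<1. \<not> redundant x i" using g unfolding good_input_def by simp
    have H0: "hedge a b x 0 = (0,0)" by simp
    have feas0: "(0,0) \<in> FCs a x 0" unfolding FCs_iff i0 by simp
    have lt: "x (Suc 0) < Min (x`{..0})" unfolding i0 by (simp add: x_def)
    have nf: "x (Suc 0) < 0 - 0 * tan a" by (simp add: x_def)
    have H1: "hedge a b x 1 = (0 - (1/P) * sin b, 0 + (1/P) * cos b)"
      using hedge_left[OF kp_pos[OF ab] km0 less_imp_le[OF cb] H0 feas0 lt x0 nf]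
      by (simp add: x_def P_def)
    have eq: "cost (hedge a b x) 1 * cos b = (1/P) * cos b"
      using hedge_inv[OF ab x0 nr order.refl H1] by simp
    have "cost (hedge a b x) 1 = 1/P" using mult_right_cancel[of "cos b" "cost (hedge a b x) 1" "1/P"] eq cb by simp
    then have "cost (hedge a b x) 1 = (1 + A*R)/P" using True by simp
    moreover have "Max (x`{..1}) = R" unfolding i1 True by simp
    ultimately show ?thesis using lower_gen[OF g] g by blast
  next
    case False
    then have Rp: "0 < R" using R0 by simp
    define x where "x = (\<lambda>j::nat. if j = 0 then (0::real) else if j = 1 then R else -1)"
    have x0: "x 0 = 0" by (simp add: x_def)
    have i0: "x`{..0} = {0}" by (simp add: x_def)
    have i1: "x`{..1} = {0,R}"
    proof -
      have "{..1::nat} = {0,1}" by auto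
      then show ?thesis by (auto simp: x_def)
    qed
    have i2: "x`{..2} = {0,R,-1}"
    proof -
      have "{..2::nat} = {0,1,2}" by auto
      then show ?thesis by (auto simp: x_def)
    qed
    have mx2: "Max (x`{..2}) = R" unfolding i2 using Rp by simp
    have g: "good_input x 2"
      unfolding good_input_def redundant_def
    proof (intro conjI allI impI)
      fix i :: nat assume "i < 2"
      then have "i = 0 \<or> i = 1" by auto
      then show "\<not> (Min (x`{..i}) \<le> x (Suc i) \<and> x (Suc i) \<le> Max (x`{..i}))"
      proof
        assume "i = 0"
        then show ?thesis using Rp by (simp only: i0) (simp add: x_def)
      next
        assume "i = 1"
        then show ?thesis using Rp by (simp only: i1) (simp add: x_def)
      qed
    qed (use i2 Rp R1 mx2 x0 in auto)
    have nr: "\<forall>i<2. \<not> redundant x i" using g unfolding good_input_def by simp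
    define T1 where "T1 = R/P"
    have H0: "hedge a b x 0 = (0,0)" by simp
    have feas0: "(0,0) \<in> FCs a x 0" unfolding FCs_iff i0 by simp
    have gt: "Max (x`{..0}) < x (Suc 0)" unfolding i0 using Rp by (simp add: x_def)
    have nf: "0 + 0 * tan a < x (Suc 0)" using Rp by (simp add: x_def)
    have H1: "hedge a b x 1 = (T1 * sin b, T1 * cos b)"
      using hedge_right[OF kp_pos[OF ab] km0 less_imp_le[OF cb] H0 feas0 gt x0 nf]
      by (simp add: x_def P_def T1_def)
    have feas1: "(T1 * sin b, T1 * cos b) \<in> FCs a x 1"
    proof -
      have "\<forall>i\<le>2. hedge a b x i \<in> FCs a x i" using hedge_solution[OF ab g] unfolding solution_def by blast
      then have "hedge a b x 1 \<in> FCs a x 1" by (metis one_le_numeral)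
      then show ?thesis unfolding H1 .
    qed
    have lt: "x (Suc 1) < Min (x`{..1})" unfolding i1 using Rp by (simp add: x_def)
    have e1: "T1 * sin b - T1 * cos b * tan a = - (T1 * km a b)" by (simp add: km_def algebra_simps)
    have Rk: "R * km a b < P"
    proof (cases "km a b < P")
      case True
      have "R * km a b \<le> 1 * km a b" using R1 km0 by (intro mult_right_mono) auto
      then show ?thesis using True by simp
    next
      case False
      then have "km a b = P" using km_le[OF ab] unfolding P_def by simp
      then have "A = 0" unfolding A_def using PmK Ppos by simp
      then have "R = - B/2" unfolding R_def by simp
      then have "R < 1" using B2 by simp
      then show ?thesis using \<open>km a b = P\<close> Ppos by simp
    qed
    have nf1: "x (Suc 1) < T1 * sin b - T1 * cos b * tan a"
    proof -
      have "T1 * km a b < 1" unfolding T1_def using Rk Ppos by (simp add: field_simps)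
      then show ?thesis unfolding e1 by (simp add: x_def)
    qed
    define T2 where "T2 = (1 - T1 * km a b)/P"
    have H2: "hedge a b x 2 = (T1 * sin b - T2 * sin b, T1 * cos b + T2 * cos b)"
      using hedge_left[OF kp_pos[OF ab] km0 less_imp_le[OF cb] H1 feas1 lt x0 nf1] unfolding e1
      by (simp add: x_def P_def T2_def numeral_2_eq_2)
    have eq2: "cost (hedge a b x) 2 * cos b = (T1 + T2) * cos b"
      using hedge_inv[OF ab x0 nr order.refl H2] by (simp add: algebra_simps)
    have "cost (hedge a b x) 2 = T1 + T2" using mult_right_cancel[of "cos b" "cost (hedge a b x) 2" "T1 + T2"] eq2 cb by simp
    also have "\<dots> = (1 + A*R)/P"
    proof -
      have Aeq: "A*P = P - km a b" unfolding A_def PmK using Ppos by simp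
      have "T1 + T2 = (P + R*(P - km a b))/P^2" unfolding T1_def T2_def using Ppos
        by (simp add: field_simps power2_eq_square)
      also have "\<dots> = (1 + A*R)/P" unfolding Aeq[symmetric] using Ppos
        by (simp add: field_simps power2_eq_square)
      finally show ?thesis .
    qed
    finally show ?thesis using lower_gen[OF g mx2] g by blast
  qed
  have "hedge_ratio a b = ereal F"
  proof (rule antisym)
    show "hedge_ratio a b \<le> ereal F"
      unfolding hedge_ratio_def by (rule SUP_least) (use upper in auto)
  next
    obtain x n where w: "good_input x n" "F \<le> cost (hedge a b x) n / OPT a x n" using witness by blast
    show "ereal F \<le> hedge_ratio a b"
      unfolding hedge_ratio_def by (rule SUP_upper2[of "(x,n)"]) (use w in auto)
  qed
  then show ?thesis unfolding Fr0 a_def b_def .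
qed

end
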